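(* Let $q$ be a prime power and $T\in\mathbb F_q[X,Y,Z]$ a reduced polynomial satisfying Property (a): $T(a,0,z)=T(0,b,z)=z$ for all $a,b,z\in\mathbb F_q$, and at least one of the following: (c) for all $a,b,c,d\in\mathbb F_q$ with $a\neq c$ there is a unique $x\in\mathbb F_q$ with $T(x,a,b)=T(x,c,d)$; (e) for all $a,b,c,d\in\mathbb F_q$ with $a\neq c$ there is a unique pair $(y,z)\in\mathbb F_q^2$ with $T(a,y,z)=b$ and $T(c,y,z)=d$. Then for every $z\in\mathbb F_q$ the polynomial $T(X,Y,z)-z\in\mathbb F_q[X,Y]$ is a $\kappa$-polynomial over $\mathbb F_q$.
   Context: A polynomial is reduced if its degree in each variable is less than $q$. A polynomial $f\in\mathbb F_q[X_1,\dots,X_n]$ is a $\kappa$-polynomial over $\mathbb F_q$ if the number $k_a=\#\{\mathbf x\in\mathbb F_q^n: f(\mathbf x)=a\}$ is the same for all $a\in\mathbb F_q^*=\mathbb F_q\setminus\{0\}$. *)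

theory Defs
  imports "HOL-Library.Cardinality"
begin

text \<open>A polynomial in F_q[X,Y,Z] is represented by its coefficient array
  c i j k (coefficient of X^i Y^j Z^k); it is reduced if all coefficients with
  some exponent \<ge> q vanish. Here q = CARD('a) for a finite field type 'a.\<close>

definition reduced3 :: "(nat \<Rightarrow> nat \<Rightarrow> nat \<Rightarrow> 'a::{finite,field}) \<Rightarrow> bool" where
  "reduced3 c \<longleftrightarrow> (\<forall>i j k. (CARD('a) \<le> i \<or> CARD('a) \<le> j \<or> CARD('a) \<le> k) \<longrightarrow> c i j k = 0)"

definition eval3 :: "(nat \<Rightarrow> nat \<Rightarrow> nat \<Rightarrow> 'a::{finite,field}) \<Rightarrow> 'a \<Rightarrow> 'a \<Rightarrow> 'a \<Rightarrow> 'a" where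
  "eval3 c x y z = (\<Sum>i<CARD('a). \<Sum>j<CARD('a). \<Sum>k<CARD('a). c i j k * x ^ i * y ^ j * z ^ k)"

definition kappa2 :: "('a::{finite,field} \<Rightarrow> 'a \<Rightarrow> 'a) \<Rightarrow> bool" where
  "kappa2 f \<longleftrightarrow> (\<forall>a b. a \<noteq> 0 \<longrightarrow> b \<noteq> 0 \<longrightarrow>
      card {p. f (fst p) (snd p) = a} = card {p. f (fst p) (snd p) = b})"

end

theory Submission
  imports Defs
begin

lemma card_unique1: "\<exists>!x. P x \<Longrightarrow> card {x. P x} = 1"
proof -
  assume "\<exists>!x. P x"
  then obtain x where "P x" "\<forall>y. P y \<longrightarrow> y = x" by blast
  then have "{x. P x} = {x}" by blast
  then show ?thesis by simp
qed

lemma fiberY: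
  fixes T :: "'a::{finite,field} \<Rightarrow> 'a \<Rightarrow> 'a"
  assumes u: "\<And>y w. y \<noteq> 0 \<Longrightarrow> \<exists>!x. T x y = w"
    and z0: "\<And>x. T x 0 = z"
    and a: "a \<noteq> 0"
  shows "card {p. T (fst p) (snd p) - z = a} = card {y::'a. y \<noteq> 0}"
proof -
  have eq: "{p. T (fst p) (snd p) - z = a} = (\<lambda>(y,x). (x,y)) ` (SIGMA y:{y. y \<noteq> 0}. {x. T x y = z + a})"
  proof (rule set_eqI, rule iffI)
    fix p assume "p \<in> {p. T (fst p) (snd p) - z = a}"
    then have h: "T (fst p) (snd p) = z + a" by (simp add: algebra_simps)
    have "snd p \<noteq> 0" using h z0[of "fst p"] a by auto
    with h show "p \<in> (\<lambda>(y,x). (x,y)) ` (SIGMA y:{y. y \<noteq> 0}. {x. T x y = z + a})"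
      by (auto intro!: image_eqI[where x="(snd p, fst p)"])
  next
    fix p assume "p \<in> (\<lambda>(y,x). (x,y)) ` (SIGMA y:{y. y \<noteq> 0}. {x. T x y = z + a})"
    then show "p \<in> {p. T (fst p) (snd p) - z = a}" by auto
  qed
  have inj: "inj_on (\<lambda>(y,x). (x,y)) (SIGMA y:{y. y \<noteq> 0}. {x. T x y = z + a})"
    by (auto simp: inj_on_def)
  have "card {p. T (fst p) (snd p) - z = a} = card (SIGMA y:{y. y \<noteq> 0}. {x. T x y = z + a})"
    unfolding eq by (rule card_image[OF inj])
  also have "\<dots> = (\<Sum>y\<in>{y. y \<noteq> 0}. card {x. T x y = z + a})"
    by (rule card_SigmaI) auto
  also have "\<dots> = (\<Sum>y\<in>{y::'a. y \<noteq> 0}. 1)"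
    by (rule sum.cong) (simp_all add: card_unique1 u)
  finally show ?thesis by simp
qed

lemma fiberX:
  fixes T :: "'a::{finite,field} \<Rightarrow> 'a \<Rightarrow> 'a"
  assumes u: "\<And>x w. x \<noteq> 0 \<Longrightarrow> \<exists>!y. T x y = w"
    and z0: "\<And>y. T 0 y = z"
    and a: "a \<noteq> 0"
  shows "card {p. T (fst p) (snd p) - z = a} = card {y::'a. y \<noteq> 0}"
proof -
  have "card {p. (\<lambda>y x. T x y) (fst p) (snd p) - z = a} = card {y::'a. y \<noteq> 0}"
    by (rule fiberY) (use u z0 a in auto)
  moreover have "{p. T (fst p) (snd p) - z = a} = prod.swap ` {p. (\<lambda>y x. T x y) (fst p) (snd p) - z = a}"
    by (auto intro!: image_eqI[where x="prod.swap _"])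
  moreover have "inj_on prod.swap A" for A :: "('a\<times>'a) set" by (auto simp: inj_on_def)
  ultimately show ?thesis by (simp add: card_image)
qed

theorem theorem4p4:
  fixes c :: "nat \<Rightarrow> nat \<Rightarrow> nat \<Rightarrow> 'a::{finite,field}"
  assumes red: "reduced3 c"
    and propa: "\<forall>a b z. eval3 c a 0 z = z \<and> eval3 c 0 b z = z"
    and ce: "(\<forall>a b c' d. a \<noteq> c' \<longrightarrow> (\<exists>!x. eval3 c x a b = eval3 c x c' d))
           \<or> (\<forall>a b c' d. a \<noteq> c' \<longrightarrow>
                (\<exists>!p. eval3 c a (fst p) (snd p) = b \<and> eval3 c c' (fst p) (snd p) = d))"
  shows "\<forall>z. kappa2 (\<lambda>x y. eval3 c x y z - z)"
proof
  fix z
  have key: "card {p. eval3 c (fst p) (snd p) z - z = a} = card {y::'a. y \<noteq> 0}" if a: "a \<noteq> 0" for a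
    using ce
  proof
    assume h: "\<forall>a b c' d. a \<noteq> c' \<longrightarrow> (\<exists>!x. eval3 c x a b = eval3 c x c' d)"
    show ?thesis
    proof (rule fiberY[where T="\<lambda>x y. eval3 c x y z"])
      fix y w :: 'a assume "y \<noteq> 0"
      then have "\<exists>!x. eval3 c x y z = eval3 c x 0 w" using h by blast
      then show "\<exists>!x. eval3 c x y z = w" using propa by simp
    qed (use propa a in auto)
  next
    assume h: "\<forall>a b c' d. a \<noteq> c' \<longrightarrow>
                (\<exists>!p. eval3 c a (fst p) (snd p) = b \<and> eval3 c c' (fst p) (snd p) = d)"
    show ?thesis
    proof (rule fiberX[where T="\<lambda>x y. eval3 c x y z"])
      fix x w :: 'a assume "x \<noteq> 0"
      then have e: "\<exists>!p. eval3 c x (fst p) (snd p) = w \<and> eval3 c 0 (fst p) (snd p) = z" using h by blast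
      then obtain p where p: "eval3 c x (fst p) (snd p) = w \<and> eval3 c 0 (fst p) (snd p) = z"
        and pu: "\<And>q. eval3 c x (fst q) (snd q) = w \<and> eval3 c 0 (fst q) (snd q) = z \<Longrightarrow> q = p" by blast
      have sp: "snd p = z" using p propa by simp
      show "\<exists>!y. eval3 c x y z = w"
      proof (rule ex1I[where a="fst p"])
        show "eval3 c x (fst p) z = w" using p sp by simp
      next
        fix y assume "eval3 c x y z = w"
        then have "(y,z) = p" using propa by (intro pu) simp
        then show "y = fst p" by auto
      qed
    qed (use propa a in auto)
  qed
  show "kappa2 (\<lambda>x y. eval3 c x y z - z)"
    unfolding kappa2_def using key by simp
qed

end
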